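(* Let $d_{2,P}(t,x)=x^4+2t^2x^2-8t^2x+t^4-t(4x^3-4t^2x+4t^2)$. If $t_0,x_0\in\mathbb Z$ satisfy $d_{2,P}(t_0,x_0)=0$, then for some $n\in\mathbb Z$, $t_0$ is given by one of the following: (1) $t_0=64(u v^3+3v^4)$ with $u=\frac{(1+\sqrt2)^{2n}+(1-\sqrt2)^{2n}}{2}$, $v=\frac{(1+\sqrt2)^{2n}-(1-\sqrt2)^{2n}}{4\sqrt2}$; (2) $t_0=4(uv^3+3v^4)$ with $u=(1+\sqrt2)^{2n+1}+(1-\sqrt2)^{2n+1}$, $v=\frac{(1+\sqrt2)^{2n+1}-(1-\sqrt2)^{2n+1}}{2\sqrt2}$; (3) $t_0=uv^3+3v^4$ with $u=\sqrt2\big((1+\sqrt2)^{2n+1}-(1-\sqrt2)^{2n+1}\big)$, $v=\frac{(1+\sqrt2)^{2n+1}+(1-\sqrt2)^{2n+1}}{2}$; (4) $t_0=uv^3+3v^4$ with $u=\sqrt2\big((1+\sqrt2)^{2n}-(1-\sqrt2)^{2n}\big)$, $v=\frac{(1+\sqrt2)^{2n}+(1-\sqrt2)^{2n}}{2}$. *)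

theory Defs
  imports Complex_Main
begin

definition d2P :: "int \<Rightarrow> int \<Rightarrow> int" where
  "d2P t x = x^4 + 2*t^2*x^2 - 8*t^2*x + t^4 - t*(4*x^3 - 4*t^2*x + 4*t^2)"

abbreviation alpha :: real where "alpha \<equiv> 1 + sqrt 2"
abbreviation beta :: real where "beta \<equiv> 1 - sqrt 2"

end

theory Submission
  imports Defs
begin
lemma d2P_alt: "d2P t x = (x^2-2*t*x-t^2)^2 - (2*t)^2*(2*x+t)"
  unfolding d2P_def by algebra

lemma sq_div:
  fixes A c N :: int
  assumes "A^2 = c^2 * N" "c \<noteq> 0"
  shows "\<exists>s. A = c*s \<and> N = s^2"
proof -
  have "c^2 dvd A^2" using assms(1) by simp
  hence "c dvd A" by simp
  then obtain s where s: "A = c*s" by blast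
  hence "c^2 * s^2 = c^2 * N" using assms(1) by (simp add: power_mult_distrib)
  hence "N = s^2" using assms(2) by simp
  thus ?thesis using s by blast
qed

lemma step_int:
  fixes t x :: int
  assumes "d2P t x = 0" "t \<noteq> 0"
  shows "\<exists>s m w. m^2 - 2*w^2 = 1 \<and> 2*s = m - 3 \<and> t = s*(3*s+4+2*w)"
proof -
  have "(x^2-2*t*x-t^2)^2 = (2*t)^2*(2*x+t)" using assms(1) d2P_alt[of t x] by simp
  then obtain s where s1: "x^2-2*t*x-t^2 = 2*t*s" and s2: "2*x+t = s^2"
    using sq_div assms(2) by fastforce
  have q: "s^4 - 6*t*s^2 + t^2 = 8*t*s"
  proof -
    have "4*(x^2-2*t*x-t^2) = (2*x)^2 - 4*t*(2*x) - 4*t^2" by algebra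
    also have "\<dots> = (s^2-t)^2 - 4*t*(s^2-t) - 4*t^2" using s2 by algebra
    finally show ?thesis using s1 by algebra
  qed
  define m where "m = 2*s+3"
  have q2: "(t - 3*s^2 - 4*s)^2 = s^2 * (2*(m^2-1))" unfolding m_def using q by algebra
  have "s \<noteq> 0"
  proof
    assume "s = 0" then have "t^2 = 0" using q by simp
    thus False using assms(2) by simp
  qed
  then obtain y where y1: "t - 3*s^2 - 4*s = s*y" and y2: "2*(m^2-1) = y^2"
    using sq_div[OF q2] by blast
  have "even (y^2)" using y2 by (metis dvd_triv_left)
  hence "even y" by simp
  then obtain w where w: "y = 2*w" by blast
  have "m^2 - 2*w^2 = 1" using y2 w by algebra
  moreover have "t = s*(3*s+4+2*w)" using y1 w by algebra
  moreover have "2*s = m-3" unfolding m_def by simp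
  ultimately show ?thesis by blast
qed

lemma final_int:
  fixes m w s t P Q N \<sigma> :: int
  assumes "m = \<sigma>*(3*P^2+6*Q^2+8*P*Q)" "w = -\<sigma>*(2*P^2+4*Q^2+6*P*Q)" "P^2-2*Q^2 = N"
    "N=1\<or>N=-1" "\<sigma>=1\<or>\<sigma>=-1" "2*s = m-3" "t = s*(3*s+4+2*w)"
  shows "t = 8*P*Q^3+12*Q^4 \<or> t = 4*Q*P^3+3*P^4"
proof -
  have e: "4*t = (m-3)*(3*m-1+4*w)" using assms(6,7) by algebra
  show ?thesis using assms(4,5)
  proof (elim disjE)
    assume "N=1" "\<sigma>=1"
    hence "4*t = 4*(8*P*Q^3+12*Q^4)" using e assms(1-3) by algebra
    thus ?thesis by simp
  next
    assume "N=1" "\<sigma>=-1"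
    hence "4*t = 4*(4*Q*P^3+3*P^4)" using e assms(1-3) by algebra
    thus ?thesis by simp
  next
    assume "N=-1" "\<sigma>=1"
    hence "4*t = 4*(4*Q*P^3+3*P^4)" using e assms(1-3) by algebra
    thus ?thesis by simp
  next
    assume "N=-1" "\<sigma>=-1"
    hence "4*t = 4*(8*P*Q^3+12*Q^4)" using e assms(1-3) by algebra
    thus ?thesis by simp
  qed
qed

lemma s2: "sqrt 2 ^ 2 = (2::real)" by simp

lemma pell_nat:
  fixes m w :: int
  assumes "m \<ge> 0" "w \<ge> 0" "m^2 - 2*w^2 = 1"
  shows "\<exists>k::nat. real_of_int m + real_of_int w * sqrt 2 = alpha^(2*k) \<and>
                    real_of_int m - real_of_int w * sqrt 2 = beta^(2*k)"
  using assms
proof (induction "nat m" arbitrary: m w rule: less_induct)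
  case less
  show ?case
  proof (cases "w = 0")
    case True
    then have "m^2 = 1" using less.prems by simp
    then have "m = 1" using less.prems(1) by (simp add: power2_eq_1_iff) 
    thus ?thesis using True by (intro exI[of _ 0]) simp
  next
    case False
    hence w1: "w \<ge> 1" using less.prems by simp
    have w2: "w \<ge> 2"
    proof (rule ccontr)
      assume "\<not> w \<ge> 2" hence "w = 1" using w1 by simp
      hence m3: "m^2 = 3" using less.prems by simp
      have "m \<le> 1 \<or> m \<ge> 2" by arith
      moreover { assume "m \<le> 1" hence "m^2 \<le> 1^2" using less.prems(1) power_mono by blast }
      moreover { assume "m \<ge> 2" hence "2^2 \<le> m^2" using power_mono by (metis zero_le_numeral)  }
      ultimately show False using m3 by auto
    qed
    define m' where "m' = 3*m - 4*w"
    define w' where "w' = 3*w - 2*m"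
    have "(4*w)^2 \<le> (3*m)^2"
    proof -
      have "0 \<le> w^2" by simp
      moreover have "(4*w)^2 = 16*w^2" "(3*m)^2 = 9*m^2" by simp_all
      ultimately show ?thesis using less.prems(3) by linarith
    qed
    hence a: "m' \<ge> 0" using power2_le_imp_le[of "4*w" "3*m"] less.prems(1) unfolding m'_def by linarith
    have "2^2 \<le> w^2" using w2 power_mono by (metis zero_le_numeral)
    hence "(2*m)^2 \<le> (3*w)^2" using less.prems(3) by (simp add: power_mult_distrib)
    hence b: "w' \<ge> 0" using power2_le_imp_le[of "2*m" "3*w"] w1 unfolding w'_def by linarith
    have "1 \<le> w^2" using w1 by (simp add: one_le_power)
    hence "m^2 < (2*w)^2" using less.prems(3) by (simp add: power_mult_distrib)
    hence "m < 2*w" using power2_less_imp_less[of m "2*w"] w1 by linarith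
    moreover have "m \<noteq> 0"
    proof
      assume "m = 0" hence "-2*w^2 = 1" using less.prems(3) by simp
      moreover have "0 \<le> w^2" by simp
      ultimately show False by linarith
    qed
    ultimately have c: "nat m' < nat m" unfolding m'_def using a less.prems(1) by simp
    have d: "m'^2 - 2*w'^2 = 1" unfolding m'_def w'_def using less.prems(3) by algebra
    obtain k where k1: "real_of_int m' + real_of_int w' * sqrt 2 = alpha^(2*k)"
      and k2: "real_of_int m' - real_of_int w' * sqrt 2 = beta^(2*k)"
      using less.hyps[OF c a b d] by blast
    have e1: "real_of_int m' = 3*real_of_int m - 4*real_of_int w" unfolding m'_def by simp
    have e2: "real_of_int w' = 3*real_of_int w - 2*real_of_int m" unfolding w'_def by simp
    have "real_of_int m + real_of_int w * sqrt 2 = (real_of_int m' + real_of_int w' * sqrt 2) * alpha^2"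
      unfolding e1 e2 power2_eq_square by (simp add: algebra_simps)
    moreover have "real_of_int m - real_of_int w * sqrt 2 = (real_of_int m' - real_of_int w' * sqrt 2) * beta^2"
      unfolding e1 e2 power2_eq_square by (simp add: algebra_simps)
    moreover have p: "\<And>x::real. x^(2*(k+1)) = x^(2*k)*x^2" by (simp add: power_add distrib_left power2_eq_square)
    ultimately show ?thesis using k1 k2 by (intro exI[of _ "k+1"]) (simp only: p)
  qed
qed
lemma ab: "alpha * beta = -1" using s2 by (simp add: algebra_simps power2_eq_square)
lemma anz: "alpha \<noteq> 0" by (smt (verit) real_sqrt_ge_zero)
lemma bnz: "beta \<noteq> 0" by (smt (verit) real_sqrt_gt_1_iff)
lemma inva: "inverse alpha = - beta" using ab anz by (simp add: field_simps)
lemma invb: "inverse beta = - alpha" using ab bnz by (simp add: field_simps)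

lemma powi_even_nat: "x powi (2 * int k) = (x::real) ^ (2*k)"
  by (metis of_nat_mult of_nat_numeral power_int_of_nat)

lemma alpha_neg: "alpha powi (- (2 * int k)) = beta ^ (2*k)"
proof -
  have "alpha powi (- (2 * int k)) = (inverse alpha) ^ (2*k)"
    by (simp add: power_int_minus powi_even_nat power_inverse)
  also have "\<dots> = beta ^ (2*k)" unfolding inva by (rule Power.power_minus_even)
  finally show ?thesis .
qed

lemma beta_neg: "beta powi (- (2 * int k)) = alpha ^ (2*k)"
proof -
  have "beta powi (- (2 * int k)) = (inverse beta) ^ (2*k)"
    by (simp add: power_int_minus powi_even_nat power_inverse)
  also have "\<dots> = alpha ^ (2*k)" unfolding invb by (rule Power.power_minus_even)
  finally show ?thesis .
qed

lemma pell_int: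
  fixes m w :: int
  assumes "m^2 - 2*w^2 = 1"
  shows "\<exists>k::int. \<exists>\<sigma>::int. (\<sigma> = 1 \<or> \<sigma> = -1) \<and>
     real_of_int m + real_of_int w * sqrt 2 = real_of_int \<sigma> * alpha powi (2*k) \<and>
     real_of_int m - real_of_int w * sqrt 2 = real_of_int \<sigma> * beta powi (2*k)"
proof -
  obtain k where k1: "real_of_int (abs m) + real_of_int (abs w) * sqrt 2 = alpha^(2*k)"
    and k2: "real_of_int (abs m) - real_of_int (abs w) * sqrt 2 = beta^(2*k)"
    using pell_nat[of "(abs m)" "(abs w)"] assms by auto
  consider "m \<ge> 0" "w \<ge> 0" | "m \<ge> 0" "w < 0" | "m < 0" "w \<ge> 0" | "m < 0" "w < 0" by linarith
  then show ?thesis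
  proof cases
    case 1 then show ?thesis using k1 k2
      by (intro exI[of _ "int k"] exI[of _ 1]) (simp add: powi_even_nat)
  next
    case 2 then show ?thesis using k1 k2
      by (intro exI[of _ "- int k"] exI[of _ 1]) (simp add: alpha_neg beta_neg)
  next
    case 3
    have "real_of_int m + real_of_int w * sqrt 2 = -(beta^(2*k))"
      "real_of_int m - real_of_int w * sqrt 2 = -(alpha^(2*k))" using 3 k1 k2 by auto
    then show ?thesis
      by (intro exI[of _ "- int k"] exI[of _ "-1"]) (simp add: alpha_neg beta_neg)
  next
    case 4
    have "real_of_int m + real_of_int w * sqrt 2 = -(alpha^(2*k))"
      "real_of_int m - real_of_int w * sqrt 2 = -(beta^(2*k))" using 4 k1 k2 by auto
    then show ?thesis
      by (intro exI[of _ "int k"] exI[of _ "-1"]) (simp add: powi_even_nat)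
  qed
qed

lemma PQ_exists:
  fixes j :: int
  shows "\<exists>(P::int) (Q::int). alpha powi j = real_of_int P + real_of_int Q * sqrt 2 \<and> beta powi j = real_of_int P - real_of_int Q * sqrt 2
            \<and> (P^2 - 2*Q^2 = 1 \<or> P^2 - 2*Q^2 = -1)"
proof (induction j rule: int_induct[where k=0])
  case base
  then show ?case by (intro exI[of _ 1] exI[of _ 0]) simp
next
  case (step1 i)
  then obtain P Q :: int where h: "alpha powi i = real_of_int P + real_of_int Q * sqrt 2" "beta powi i = real_of_int P - real_of_int Q * sqrt 2"
     "P^2 - 2*Q^2 = 1 \<or> P^2 - 2*Q^2 = -1" by blast
  have "alpha powi (i+1) = alpha powi i * alpha" by (rule power_int_add_1) (simp add: anz)
  also have "\<dots> = real_of_int (P+2*Q) + real_of_int (P+Q) * sqrt 2"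
    using h(1) by (simp add: algebra_simps)
  finally have e1: "alpha powi (i+1) = real_of_int (P+2*Q) + real_of_int (P+Q) * sqrt 2" .
  have "beta powi (i+1) = beta powi i * beta" by (rule power_int_add_1) (simp add: bnz)
  also have "\<dots> = real_of_int (P+2*Q) - real_of_int (P+Q) * sqrt 2"
    unfolding h(2) by (simp add: algebra_simps)
  finally have e2: "beta powi (i+1) = real_of_int (P+2*Q) - real_of_int (P+Q) * sqrt 2" .
  have "(P+2*Q)^2 - 2*(P+Q)^2 = -(P^2-2*Q^2)" by algebra
  hence "(P+2*Q)^2 - 2*(P+Q)^2 = 1 \<or> (P+2*Q)^2 - 2*(P+Q)^2 = -1" using h(3) by auto
  then show ?case using e1 e2 by blast
next
  case (step2 i)
  then obtain P Q :: int where h: "alpha powi i = real_of_int P + real_of_int Q * sqrt 2" "beta powi i = real_of_int P - real_of_int Q * sqrt 2"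
     "P^2 - 2*Q^2 = 1 \<or> P^2 - 2*Q^2 = -1" by blast
  have "alpha powi (i-1) = alpha powi i * inverse alpha"
    using power_int_add[of alpha i "-1"] anz by (simp add: power_int_minus)
  also have "\<dots> = real_of_int (2*Q-P) + real_of_int (P-Q) * sqrt 2"
    unfolding h(1) inva by (simp add: algebra_simps)
  finally have e1: "alpha powi (i-1) = real_of_int (2*Q-P) + real_of_int (P-Q) * sqrt 2" .
  have "beta powi (i-1) = beta powi i * inverse beta"
    using power_int_add[of beta i "-1"] bnz by (simp add: power_int_minus)
  also have "\<dots> = real_of_int (2*Q-P) - real_of_int (P-Q) * sqrt 2"
    unfolding h(2) invb by (simp add: algebra_simps)
  finally have e2: "beta powi (i-1) = real_of_int (2*Q-P) - real_of_int (P-Q) * sqrt 2" .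
  have "(2*Q-P)^2 - 2*(P-Q)^2 = -(P^2-2*Q^2)" by algebra
  hence "(2*Q-P)^2 - 2*(P-Q)^2 = 1 \<or> (2*Q-P)^2 - 2*(P-Q)^2 = -1" using h(3) by auto
  then show ?case using e1 e2 by blast
qed

lemma conj_alg:
  fixes r \<sigma> mm ww PP QQ :: real
  assumes h: "r*r = 2" and A: "mm + ww*r = \<sigma>*((PP - QQ*r)^2*(3-2*r))" and B: "mm - ww*r = \<sigma>*((PP+QQ*r)^2*(3+2*r))"
  shows "mm = \<sigma>*(3*PP^2+6*QQ^2+8*PP*QQ)" "ww*r = (-\<sigma>*(2*PP^2+4*QQ^2+6*PP*QQ))*r"
proof -
  have "(PP+QQ*r)^2*(3+2*r) = (3*PP^2 + 3*(r*r)*QQ^2 + 4*PP*QQ*(r*r)) + (2*PP^2 + 2*(r*r)*QQ^2 + 6*PP*QQ)*r"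
    by algebra
  hence e1: "(PP+QQ*r)^2*(3+2*r) = (3*PP^2+6*QQ^2+8*PP*QQ) + (2*PP^2+4*QQ^2+6*PP*QQ)*r" unfolding h by simp
  have "(PP-QQ*r)^2*(3-2*r) = (3*PP^2 + 3*(r*r)*QQ^2 + 4*PP*QQ*(r*r)) - (2*PP^2 + 2*(r*r)*QQ^2 + 6*PP*QQ)*r"
    by algebra
  hence e2: "(PP-QQ*r)^2*(3-2*r) = (3*PP^2+6*QQ^2+8*PP*QQ) - (2*PP^2+4*QQ^2+6*PP*QQ)*r" unfolding h by simp
  have A': "mm + ww*r = \<sigma>*((3*PP^2+6*QQ^2+8*PP*QQ) - (2*PP^2+4*QQ^2+6*PP*QQ)*r)" using A unfolding e2 .
  have B': "mm - ww*r = \<sigma>*((3*PP^2+6*QQ^2+8*PP*QQ) + (2*PP^2+4*QQ^2+6*PP*QQ)*r)" using B unfolding e1 .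
  show "mm = \<sigma>*(3*PP^2+6*QQ^2+8*PP*QQ)" using A' B' by algebra
  show "ww*r = (-\<sigma>*(2*PP^2+4*QQ^2+6*PP*QQ))*r" using A' B' by algebra
qed

lemma fam:
  assumes "alpha powi j = real_of_int P + real_of_int Q * sqrt 2"
          "beta powi j = real_of_int P - real_of_int Q * sqrt 2"
  shows "(alpha powi j + beta powi j)/2 = P"
        "(alpha powi j - beta powi j)/(4*sqrt 2) = Q/2"
        "alpha powi j + beta powi j = 2*P"
        "(alpha powi j - beta powi j)/(2*sqrt 2) = Q"
        "sqrt 2 * (alpha powi j - beta powi j) = 4*Q"
  unfolding assms by (simp_all add: field_simps)

lemma sq_rel:
  fixes k j :: int
  assumes "j = -(k+1)"
  shows "alpha powi (2*k) = (beta powi j)^2 * beta^2"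
        "beta powi (2*k) = (alpha powi j)^2 * alpha^2"
proof -
  have "(beta powi j)^2 * beta^2 = beta powi (j*2 + 2)"
    by (simp add: power_int_power' power_int_add bnz)
  also have "j*2+2 = -(2*k)" using assms by simp
  hence "beta powi (j*2 + 2) = beta powi (-(2*k))" by (simp only:)
  also have "\<dots> = (inverse beta) powi (2*k)" by (simp add: power_int_minus power_int_inverse)
  also have "\<dots> = alpha powi (2*k)" unfolding invb by (rule power_int_minus_left_even) simp
  finally show "alpha powi (2*k) = (beta powi j)^2 * beta^2" by simp
  have "(alpha powi j)^2 * alpha^2 = alpha powi (j*2 + 2)"
    by (simp add: power_int_power' power_int_add anz)
  also have "j*2+2 = -(2*k)" using assms by simp
  hence "alpha powi (j*2 + 2) = alpha powi (-(2*k))" by (simp only:)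
  also have "\<dots> = (inverse alpha) powi (2*k)" by (simp add: power_int_minus power_int_inverse)
  also have "\<dots> = beta powi (2*k)" unfolding inva by (rule power_int_minus_left_even) simp
  finally show "beta powi (2*k) = (alpha powi j)^2 * alpha^2" by simp
qed

theorem proposition4p7:
  fixes t0 x0 :: int
  assumes "d2P t0 x0 = 0"
  shows "\<exists>n::int.
    (let u = (alpha powi (2*n) + beta powi (2*n)) / 2;
         v = (alpha powi (2*n) - beta powi (2*n)) / (4 * sqrt 2)
     in real_of_int t0 = 64 * (u * v^3 + 3 * v^4))
  \<or> (let u = alpha powi (2*n+1) + beta powi (2*n+1);
         v = (alpha powi (2*n+1) - beta powi (2*n+1)) / (2 * sqrt 2)
     in real_of_int t0 = 4 * (u * v^3 + 3 * v^4))
  \<or> (let u = sqrt 2 * (alpha powi (2*n+1) - beta powi (2*n+1));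
         v = (alpha powi (2*n+1) + beta powi (2*n+1)) / 2
     in real_of_int t0 = u * v^3 + 3 * v^4)
  \<or> (let u = sqrt 2 * (alpha powi (2*n) - beta powi (2*n));
         v = (alpha powi (2*n) + beta powi (2*n)) / 2
     in real_of_int t0 = u * v^3 + 3 * v^4)"
proof (cases "t0 = 0")
  case True
  then show ?thesis by (intro exI[of _ 0]) (simp add: Let_def)
next
  case False
  obtain s m w where smw: "m^2 - 2*w^2 = 1" "2*s = m - 3" "t0 = s*(3*s+4+2*w)"
    using step_int[OF assms False] by blast
  obtain k \<sigma> where k: "\<sigma> = 1 \<or> \<sigma> = -1"
     "real_of_int m + real_of_int w * sqrt 2 = real_of_int \<sigma> * alpha powi (2*k)"
     "real_of_int m - real_of_int w * sqrt 2 = real_of_int \<sigma> * beta powi (2*k)"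
    using pell_int[OF smw(1)] by blast
  define j where "j = -(k+1)"
  obtain P Q :: int where PQ: "alpha powi j = real_of_int P + real_of_int Q * sqrt 2"
     "beta powi j = real_of_int P - real_of_int Q * sqrt 2"
     "P^2 - 2*Q^2 = 1 \<or> P^2 - 2*Q^2 = -1"
    using PQ_exists[of j] by blast
  have b2: "beta^2 = 3 - 2*sqrt 2" by (simp add: power2_eq_square algebra_simps)
  have a2: "alpha^2 = 3 + 2*sqrt 2" by (simp add: power2_eq_square algebra_simps)
  have A: "real_of_int m + real_of_int w * sqrt 2 = real_of_int \<sigma> *
      ((real_of_int P - real_of_int Q * sqrt 2)^2 * (3 - 2*sqrt 2))"
    using k(2) sq_rel(1)[OF j_def] PQ(2) b2 by simp
  have B: "real_of_int m - real_of_int w * sqrt 2 = real_of_int \<sigma> *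
      ((real_of_int P + real_of_int Q * sqrt 2)^2 * (3 + 2*sqrt 2))"
    using k(3) sq_rel(2)[OF j_def] PQ(1) a2 by simp
  have r: "sqrt 2 * sqrt 2 = (2::real)" by simp
  have "real_of_int m = real_of_int (\<sigma>*(3*P^2+6*Q^2+8*P*Q))"
    using conj_alg(1)[OF r A B] by simp
  hence mE: "m = \<sigma>*(3*P^2+6*Q^2+8*P*Q)" by (simp only: of_int_eq_iff)
  have "real_of_int w * sqrt 2 = real_of_int (-\<sigma>*(2*P^2+4*Q^2+6*P*Q)) * sqrt 2"
    using conj_alg(2)[OF r A B] by simp
  hence "real_of_int w = real_of_int (-\<sigma>*(2*P^2+4*Q^2+6*P*Q))"
    by (rule mult_right_cancel[THEN iffD1, rotated]) simp
  hence wE: "w = -\<sigma>*(2*P^2+4*Q^2+6*P*Q)" by (simp only: of_int_eq_iff)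
  have tE: "t0 = 8*P*Q^3+12*Q^4 \<or> t0 = 4*Q*P^3+3*P^4"
    using final_int[OF mE wE refl PQ(3) k(1) smw(2) smw(3)] .
  have F: "(alpha powi j + beta powi j)/2 = P"
        "(alpha powi j - beta powi j)/(4*sqrt 2) = Q/2"
        "alpha powi j + beta powi j = 2*P"
        "(alpha powi j - beta powi j)/(2*sqrt 2) = Q"
        "sqrt 2 * (alpha powi j - beta powi j) = 4*Q"
    using fam[OF PQ(1,2)] by auto
  obtain n where "j = 2*n \<or> j = 2*n+1" by (metis evenE oddE)
  then show ?thesis
  proof
    assume jn: "j = 2*n"
    note Fn = F[unfolded jn]
    from tE show ?thesis
    proof
      assume t: "t0 = 8*P*Q^3+12*Q^4"
      have h: "real_of_int t0 = 64 * (real_of_int P * (real_of_int Q/2)^3 + 3*(real_of_int Q/2)^4)"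
        unfolding t by (simp add: power_divide algebra_simps)
      show ?thesis by (intro exI[of _ n] disjI1) (simp only: Let_def Fn h, (simp)?)
    next
      assume t: "t0 = 4*Q*P^3+3*P^4"
      have h: "real_of_int t0 = 4*real_of_int Q * real_of_int P^3 + 3*real_of_int P^4"
        unfolding t by simp
      show ?thesis by (intro exI[of _ n] disjI2) (simp only: Let_def Fn h, (simp)?)
    qed
  next
    assume jn: "j = 2*n+1"
    note Fn = F[unfolded jn]
    from tE show ?thesis
    proof
      assume t: "t0 = 8*P*Q^3+12*Q^4"
      have h: "real_of_int t0 = 4 * (2*real_of_int P * real_of_int Q^3 + 3*real_of_int Q^4)"
        unfolding t by (simp add: algebra_simps)
      show ?thesis by (intro exI[of _ n] disjI2 disjI1) (simp only: Let_def Fn h, (simp)?)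
    next
      assume t: "t0 = 4*Q*P^3+3*P^4"
      have h: "real_of_int t0 = 4*real_of_int Q * real_of_int P^3 + 3*real_of_int P^4"
        unfolding t by simp
      show ?thesis by (intro exI[of _ n] disjI2 disjI1) (simp only: Let_def Fn h, (simp)?)
    qed
  qed
qed

end
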